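(* Let $R>0$, let $\Theta$ be a smooth function on $[0,R]$ that is positive on $[0,R)$, let $\sigma\in\mathbb{R}\setminus\{0\}$, and let $u$ be a positive first eigenfunction of $$u''+\frac{\Theta'}{\Theta}u'+\lambda u=0 \text{ on }[0,R],\qquad u'(0)=\sigma u(0),\qquad u'(R)=0,$$ with first eigenvalue $\lambda_1(R,\Theta,\sigma)$. Then: (a) if $\sigma>0$, then $u'>0$ on $[0,R)$; (b) if $\sigma<0$, then $u'<0$ on $[0,R)$; (c) if $\sigma>0$ and $0<\bar R<R$, then $\lambda_1(R,\Theta,\sigma)<\lambda_1(\bar R,\Theta,\sigma)$, where $\lambda_1(\bar R,\Theta,\sigma)$ is the first eigenvalue of the same problem on $[0,\bar R]$ with conditions $u'(0)=\sigma u(0)$, $u'(\bar R)=0$. Moreover, set $\sigma(r)=u'(r)/u(r)$ and assume in addition that $(\log\Theta)''<0$ on $[0,R)$. Then: (d) if $\sigma>0$, then $0\leq\sigma(r)\leq\sigma$ for all $r\in[0,R]$; (e) if $\sigma<0$, then $\sigma\leq\sigma(r)\leq0$ for all $r\in[0,R]$.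
   Context: The eigenvalue problem is the spectral problem for $Lu=-u''-\frac{\Theta'}{\Theta}u'$ on $L^2([0,R],\Theta(r)\,dr)$ with the given boundary conditions; its first eigenvalue is $\lambda_1(R,\Theta,\sigma)=\inf_{u\in H^1[0,R]}\frac{\int_0^Ru'^2\Theta\,dr+\sigma u(0)^2}{\int_0^Ru^2\Theta\,dr}$. *)

theory Defs
  imports "HOL-Analysis.Analysis"
begin

definition admissible_pairs :: "real \<Rightarrow> (real \<Rightarrow> real) \<Rightarrow> ((real \<Rightarrow> real) \<times> (real \<Rightarrow> real)) set" where
  "admissible_pairs R \<Theta> =
     {(u, v). (\<forall>x\<in>{0..R}. (u has_real_derivative v x) (at x within {0..R}))
              \<and> continuous_on {0..R} v
              \<and> integral {0..R} (\<lambda>r. (u r)\<^sup>2 * \<Theta> r) \<noteq> 0}"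

definition first_eigenvalue :: "real \<Rightarrow> (real \<Rightarrow> real) \<Rightarrow> real \<Rightarrow> real" where
  "first_eigenvalue R \<Theta> \<sigma> =
     (INF p \<in> admissible_pairs R \<Theta>.
        (integral {0..R} (\<lambda>r. (snd p r)\<^sup>2 * \<Theta> r) + \<sigma> * (fst p 0)\<^sup>2)
        / integral {0..R} (\<lambda>r. (fst p r)\<^sup>2 * \<Theta> r))"

end

theory Submission
  imports Defs
begin

lemma no_interior_max:
  fixes f g :: "real \<Rightarrow> real"
  assumes r0: "0 < r0" "r0 < R"
    and fd: "\<And>x. 0 < x \<Longrightarrow> x < R \<Longrightarrow> (f has_real_derivative g x) (at x)"
    and gd: "(g has_real_derivative l) (at r0)"
    and lpos: "g r0 = 0 \<Longrightarrow> 0 < l"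
    and mx: "\<forall>y\<in>{0..R}. f y \<le> f r0"
  shows False
proof -
  have "g r0 = 0"
  proof (rule DERIV_local_max[OF fd[OF r0] _ ])
    show "0 < min r0 (R - r0)" using r0 by simp
    show "\<forall>y. \<bar>r0 - y\<bar> < min r0 (R - r0) \<longrightarrow> f y \<le> f r0"
    proof (intro allI impI)
      fix y assume "\<bar>r0 - y\<bar> < min r0 (R - r0)"
      then have "y \<in> {0..R}" by auto
      then show "f y \<le> f r0" using mx by blast
    qed
  qed
  then have l: "0 < l" using lpos by simp
  obtain d where d: "d > 0" "\<forall>h>0. h < d \<longrightarrow> g r0 < g (r0 + h)"
    using DERIV_pos_inc_right[OF gd l] by blast
  define h where "h = min d (R - r0) / 2"
  have h: "0 < h" "h < d" "r0 + h < R" using d r0 unfolding h_def by (auto simp: min_def field_simps)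
  obtain z where z: "r0 < z" "z < r0 + h" "f (r0 + h) - f r0 = (r0 + h - r0) * g z"
    using MVT2[of r0 "r0 + h" f g] h r0 fd by force
  have "g z > 0"
    using d(2)[rule_format, of "z - r0"] z h \<open>g r0 = 0\<close> by auto
  then have "h * g z > 0" using h(1) by simp
  then have "f (r0 + h) > f r0" using z(3) by simp
  moreover have "f (r0 + h) \<le> f r0" using mx h r0 by auto
  ultimately show False by simp
qed

lemma ode_mult:
  fixes T T1 u0 u1 u2 lam :: real
  assumes "T \<noteq> 0" "u2 + T1 / T * u1 + lam * u0 = 0"
  shows "T1 * u1 + T * u2 = - lam * (T * u0)"
proof -
  have "T * (u2 + T1 / T * u1 + lam * u0) = 0" using assms(2) by simp
  then have "T * u2 + T * (T1 / T * u1) + T * (lam * u0) = 0" by (simp add: distrib_left)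
  moreover have "T * (T1 / T * u1) = T1 * u1" using assms(1) by simp
  ultimately show ?thesis by (simp add: algebra_simps)
qed

lemma pos_integral:
  fixes f :: "real \<Rightarrow> real"
  assumes "a < b" "continuous_on {a..b} f" "\<And>x. x \<in> {a<..<b} \<Longrightarrow> 0 \<le> f x" "f a > 0"
  shows "integral {a..b} f > 0"
proof -
  have int: "(f has_integral integral {a..b} f) {a..b}"
    using integrable_continuous_interval[OF assms(2)] by blast
  have "integral {a..b} f \<ge> 0"
  proof -
    have "integral {a..b} f = integral {a<..<b} f"
      by (rule integral_open_interval_real)
    also have "\<dots> \<ge> 0" using assms(3) integrable_continuous_interval[OF assms(2)]
      by (intro integral_nonneg) (auto simp: integrable_on_open_interval_real)
    finally show ?thesis .
  qed
  moreover have "integral {a..b} f \<noteq> 0"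
  proof
    assume "integral {a..b} f = 0"
    then have "f a = 0"
      using has_integral_0_cbox_imp_0[of a b f a] int assms by auto
    then show False using assms by simp
  qed
  ultimately show ?thesis by simp
qed

lemma rayleigh_bdd_below:
  fixes R \<sigma> :: real and \<Theta> :: "real \<Rightarrow> real"
  assumes R: "R > 0" and Tc: "continuous_on {0..R} \<Theta>" and Tp: "\<forall>r\<in>{0..<R}. \<Theta> r > 0"
    and Tn: "\<forall>r\<in>{0..R}. \<Theta> r \<ge> 0"
  shows "bdd_below ((\<lambda>p. (integral {0..R} (\<lambda>r. (snd p r)\<^sup>2 * \<Theta> r) + \<sigma> * (fst p 0)\<^sup>2)
        / integral {0..R} (\<lambda>r. (fst p r)\<^sup>2 * \<Theta> r)) ` admissible_pairs R \<Theta>)"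
proof -
  define a where "a = R / 2"
  have a: "0 < a" "a < R" using R by (auto simp: a_def)
  obtain x0 where x0: "x0 \<in> {0..a}" "\<forall>y\<in>{0..a}. \<Theta> x0 \<le> \<Theta> y"
    using continuous_attains_inf[of "{0..a}" \<Theta>] continuous_on_subset[OF Tc, of "{0..a}"] a by auto
  define A where "A = \<Theta> x0"
  have A: "A > 0" using Tp x0 a by (auto simp: A_def)
  have TA: "\<And>y. y \<in> {0..a} \<Longrightarrow> A \<le> \<Theta> y" using x0 by (auto simp: A_def)
  define t where "t = \<bar>\<sigma>\<bar> / a"
  have t: "t \<ge> 0" using a by (auto simp: t_def)
  define K where "K = (t + t^2 * a^2 / A) / A"
  show ?thesis unfolding bdd_below_def
  proof (intro exI ballI)
    fix q assume "q \<in> (\<lambda>p. (integral {0..R} (\<lambda>r. (snd p r)\<^sup>2 * \<Theta> r) + \<sigma> * (fst p 0)\<^sup>2)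
        / integral {0..R} (\<lambda>r. (fst p r)\<^sup>2 * \<Theta> r)) ` admissible_pairs R \<Theta>"
    then obtain f v where q: "q = (integral {0..R} (\<lambda>r. (v r)\<^sup>2 * \<Theta> r) + \<sigma> * (f 0)\<^sup>2)
        / integral {0..R} (\<lambda>r. (f r)\<^sup>2 * \<Theta> r)"
      and fd: "\<forall>x\<in>{0..R}. (f has_real_derivative v x) (at x within {0..R})"
      and vc: "continuous_on {0..R} v"
      and Dnz: "integral {0..R} (\<lambda>r. (f r)\<^sup>2 * \<Theta> r) \<noteq> 0"
      unfolding admissible_pairs_def by auto
    define N where "N = integral {0..R} (\<lambda>r. (v r)\<^sup>2 * \<Theta> r)"
    define D where "D = integral {0..R} (\<lambda>r. (f r)\<^sup>2 * \<Theta> r)"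
    have fc: "continuous_on {0..R} f" using fd by (intro DERIV_continuous_on) auto
    have cN: "continuous_on {0..R} (\<lambda>r. (v r)\<^sup>2 * \<Theta> r)" using vc Tc by (intro continuous_intros)
    have cD: "continuous_on {0..R} (\<lambda>r. (f r)\<^sup>2 * \<Theta> r)" using fc Tc by (intro continuous_intros)
    have iN: "((\<lambda>r. (v r)\<^sup>2 * \<Theta> r) has_integral N) {0..R}"
      unfolding N_def using integrable_continuous_interval[OF cN] by auto
    have iD: "((\<lambda>r. (f r)\<^sup>2 * \<Theta> r) has_integral D) {0..R}"
      unfolding D_def using integrable_continuous_interval[OF cD] by auto
    have D0: "D \<ge> 0" unfolding D_def using Tn by (intro integral_nonneg integrable_continuous_interval[OF cD]) auto
    with Dnz have Dp: "D > 0" by (auto simp: D_def)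
    have sub: "{0..a} \<subseteq> {0..R}" using a by auto
    have iNa: "((\<lambda>r. (v r)\<^sup>2 * \<Theta> r) has_integral integral {0..a} (\<lambda>r. (v r)\<^sup>2 * \<Theta> r)) {0..a}"
      using integrable_continuous_interval[OF continuous_on_subset[OF cN sub]] by auto
    have iDa: "((\<lambda>r. (f r)\<^sup>2 * \<Theta> r) has_integral integral {0..a} (\<lambda>r. (f r)\<^sup>2 * \<Theta> r)) {0..a}"
      using integrable_continuous_interval[OF continuous_on_subset[OF cD sub]] by auto
    have Na: "integral {0..a} (\<lambda>r. (v r)\<^sup>2 * \<Theta> r) \<le> N"
      by (rule has_integral_subset_le[OF sub iNa iN]) (use Tn in auto)
    have Da: "integral {0..a} (\<lambda>r. (f r)\<^sup>2 * \<Theta> r) \<le> D"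
      by (rule has_integral_subset_le[OF sub iDa iD]) (use Tn in auto)
    define G' where "G' = (\<lambda>x. - t * (f x)\<^sup>2 + t * (a - x) * (2 * f x * v x))"
    have Gd: "((\<lambda>x. t * (a - x) * (f x)\<^sup>2) has_real_derivative G' x) (at x within {0..a})"
      if "x \<in> {0..a}" for x
    proof -
      have "(f has_real_derivative v x) (at x within {0..a})"
        using DERIV_subset[of f "v x" x "{0..R}" "{0..a}"] fd that sub by auto
      then show ?thesis unfolding G'_def
        by (auto intro!: derivative_eq_intros simp: algebra_simps power2_eq_square)
    qed
    have iG: "(G' has_integral (t * (a - a) * (f a)\<^sup>2 - t * (a - 0) * (f 0)\<^sup>2)) {0..a}"
      using fundamental_theorem_of_calculus[of 0 a "\<lambda>x. t * (a - x) * (f x)\<^sup>2" G'] Gd a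
      by (auto simp: has_real_derivative_iff_has_vector_derivative)
    have taf: "t * (a - a) * (f a)\<^sup>2 - t * (a - 0) * (f 0)\<^sup>2 = - \<bar>\<sigma>\<bar> * (f 0)\<^sup>2"
      using a by (simp add: t_def)
    have pw: "- ((v x)\<^sup>2 * \<Theta> x) - K * ((f x)\<^sup>2 * \<Theta> x) \<le> G' x" if x: "x \<in> {0..a}" for x
    proof -
      have Tx: "\<Theta> x \<ge> A" using TA x .
      have Tx0: "\<Theta> x > 0" using A Tx by linarith
      define h where "h = t * (a - x)"
      have h0: "0 \<le> h" "h \<le> t * a" using x t by (auto simp: h_def mult_left_mono)
      have "0 \<le> \<Theta> x * (v x + h * f x / \<Theta> x)\<^sup>2" using Tx0 by simp
      also have "\<dots> = \<Theta> x * (v x)\<^sup>2 + 2 * h * f x * v x + h^2 * (f x)\<^sup>2 / \<Theta> x"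
        using Tx0 by (simp add: field_simps power2_eq_square)
      finally have 1: "- (\<Theta> x * (v x)\<^sup>2) - h^2 * (f x)\<^sup>2 / \<Theta> x \<le> 2 * h * f x * v x" by linarith
      have "h^2 / \<Theta> x \<le> (t*a)^2 / A"
        using h0 Tx A by (intro frac_le power_mono) auto
      then have 2: "t + h^2 / \<Theta> x \<le> K * \<Theta> x"
      proof -
        assume "h^2 / \<Theta> x \<le> (t*a)^2 / A"
        then have "t + h^2 / \<Theta> x \<le> t + t^2 * a^2 / A" by (simp add: power_mult_distrib)
        also have "\<dots> = K * A" using A by (simp add: K_def)
        also have "\<dots> \<le> K * \<Theta> x" using Tx A t by (intro mult_left_mono) (auto simp: K_def)
        finally show ?thesis .
      qed
      have 3: "(t + h^2 / \<Theta> x) * (f x)\<^sup>2 \<le> K * \<Theta> x * (f x)\<^sup>2"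
        using 2 by (intro mult_right_mono) auto
      show ?thesis using 1 3 unfolding G'_def h_def[symmetric]
        by (simp add: algebra_simps)
    qed
    have le: "- integral {0..a} (\<lambda>r. (v r)\<^sup>2 * \<Theta> r) - K * integral {0..a} (\<lambda>r. (f r)\<^sup>2 * \<Theta> r)
        \<le> - \<bar>\<sigma>\<bar> * (f 0)\<^sup>2"
      using has_integral_le[OF has_integral_diff[OF has_integral_neg[OF iNa] has_integral_mult_right[OF iDa, of K]] iG[unfolded taf]] pw
      by auto
    have K0: "K \<ge> 0" using A t by (auto simp: K_def)
    have "- K * D \<le> N + \<sigma> * (f 0)\<^sup>2"
    proof -
      have "K * integral {0..a} (\<lambda>r. (f r)\<^sup>2 * \<Theta> r) \<le> K * D" using Da K0 by (rule mult_left_mono)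
      moreover have "- \<bar>\<sigma>\<bar> * (f 0)\<^sup>2 \<le> \<sigma> * (f 0)\<^sup>2"
        using mult_right_mono[of "- \<bar>\<sigma>\<bar>" \<sigma> "(f 0)\<^sup>2"] by simp
      ultimately show ?thesis using le Na by linarith
    qed
    then show "- K \<le> q" using Dp unfolding q N_def[symmetric] D_def[symmetric]
      by (simp add: field_simps)
  qed
qed

lemma pw_ineq:
  fixes T U s f v \<epsilon> x \<delta> A B b :: real
  assumes T: "T > 0" and U: "U > 0" and e: "\<epsilon> > 0" and x: "0 \<le> x" "x \<le> b"
    and AW: "A \<le> U^2 * T" and WB: "U^2 * T \<le> B" and eA: "\<epsilon> \<le> A / (2 * b^2)"
    and d: "\<delta> = \<epsilon> / (2 * B)" and A: "A > 0" and b: "b > 0"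
  shows "0 \<le> T * (v - s*f)^2 + 2*\<epsilon>*x*f*(v - s*f)/U^2 + \<epsilon>*f^2/U^2 - \<delta>*T*f^2"
proof -
  define q where "q = v - s*f"
  define k where "k = \<epsilon>*x*f/U^2"
  define W where "W = U^2 * T"
  have W: "W > 0" using T U by (simp add: W_def)
  have B: "B > 0" using W WB by (simp add: W_def)
  have "0 \<le> T * (q + k/T)^2" using T by simp
  also have "\<dots> = T*q^2 + 2*k*q + k^2/T" using T by (simp add: field_simps power2_eq_square)
  finally have 1: "T*q^2 + 2*k*q \<ge> - (k^2/T)" by linarith
  have k2: "k^2/T = (f^2/U^2) * (\<epsilon>^2*x^2/W)"
    using T U by (simp add: k_def W_def field_simps power2_eq_square)
  have dT: "\<delta>*T*f^2 = (f^2/U^2) * (\<delta>*W)"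
    using T U by (simp add: W_def field_simps power2_eq_square)
  have eq: "\<epsilon>*f^2/U^2 = (f^2/U^2) * \<epsilon>" by simp
  have a1: "\<epsilon>^2*x^2/W \<le> \<epsilon>^2*b^2/A"
    using x AW A W by (intro frac_le mult_left_mono power_mono) (auto simp: W_def)
  have a2: "\<epsilon>^2*b^2/A \<le> \<epsilon>/2"
  proof -
    have "\<epsilon> * (2*b^2) \<le> A" using eA b by (simp add: field_simps)
    then have "\<epsilon>^2*b^2*2 \<le> \<epsilon>*A" using e
      by (metis (no_types, lifting) mult.assoc mult.commute mult_le_cancel_left_pos power2_eq_square)
    then show ?thesis using A by (simp add: field_simps)
  qed
  have a3: "\<delta>*W \<le> \<epsilon>/2"
  proof -
    have "\<delta>*W \<le> \<delta>*B" using WB d e B by (intro mult_left_mono) (auto simp: W_def)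
    also have "\<dots> = \<epsilon>/2" using d B by simp
    finally show ?thesis .
  qed
  have a4: "\<epsilon>^2*x^2/W + \<delta>*W \<le> \<epsilon>" using a1 a2 a3 by linarith
  have "(f^2/U^2) * (\<epsilon>^2*x^2/W + \<delta>*W) \<le> (f^2/U^2) * \<epsilon>"
    using a4 by (intro mult_left_mono) auto
  then have 5: "(f^2/U^2) * (\<epsilon>^2*x^2/W) + (f^2/U^2) * (\<delta>*W) \<le> (f^2/U^2) * \<epsilon>"
    by (simp add: distrib_left)
  have ge: "T*(v-s*f)^2 + 2*\<epsilon>*x*f*(v-s*f)/U^2 + \<epsilon>*f^2/U^2 - \<delta>*T*f^2
      = (T*q^2 + 2*k*q) + (f^2/U^2)*\<epsilon> - (f^2/U^2)*(\<delta>*W)"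
    unfolding dT[symmetric] q_def k_def by (simp add: field_simps)
  show ?thesis unfolding ge using 1 k2 5 by linarith
qed

lemma gap_lemma:
  fixes b lam \<sigma> :: real and \<Theta> Tder u u' u'' :: "real \<Rightarrow> real"
  assumes b: "0 < b"
    and Tc: "continuous_on {0..b} \<Theta>"
    and Tp: "\<forall>x\<in>{0..b}. \<Theta> x > 0"
    and Td: "\<forall>x\<in>{0..b}. (\<Theta> has_real_derivative Tder x) (at x within {0..b})"
    and ud1: "\<forall>x\<in>{0..b}. (u has_real_derivative u' x) (at x within {0..b})"
    and ud2: "\<forall>x\<in>{0..b}. (u' has_real_derivative u'' x) (at x within {0..b})"
    and upos: "\<forall>x\<in>{0..b}. u x > 0"
    and eq: "\<forall>x\<in>{0..b}. u'' x + Tder x / \<Theta> x * u' x + lam * u x = 0"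
    and bc0: "u' 0 = \<sigma> * u 0"
    and ub: "u' b > 0"
    and m: "\<sigma> * (1 - \<Theta> 0) \<ge> 0"
  shows "\<exists>\<delta>>0. \<forall>p\<in>admissible_pairs b \<Theta>. lam + \<delta> \<le>
     (integral {0..b} (\<lambda>r. (snd p r)\<^sup>2 * \<Theta> r) + \<sigma> * (fst p 0)\<^sup>2)
        / integral {0..b} (\<lambda>r. (fst p r)\<^sup>2 * \<Theta> r)"
proof -
  have uc: "continuous_on {0..b} u" using ud1 by (intro DERIV_continuous_on) auto
  have Wc: "continuous_on {0..b} (\<lambda>x. (u x)^2 * \<Theta> x)" using uc Tc by (intro continuous_intros)
  obtain x1 where x1: "x1 \<in> {0..b}" "\<forall>y\<in>{0..b}. (u x1)^2 * \<Theta> x1 \<le> (u y)^2 * \<Theta> y"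
    using continuous_attains_inf[OF _ _ Wc] b by auto
  obtain x2 where x2: "x2 \<in> {0..b}" "\<forall>y\<in>{0..b}. (u y)^2 * \<Theta> y \<le> (u x2)^2 * \<Theta> x2"
    using continuous_attains_sup[OF _ _ Wc] b by auto
  define A where "A = (u x1)^2 * \<Theta> x1"
  define B where "B = (u x2)^2 * \<Theta> x2"
  have "u x1 > 0" "\<Theta> x1 > 0" "u x2 > 0" "\<Theta> x2 > 0" using x1(1) x2(1) upos Tp by blast+
  then have A: "A > 0" unfolding A_def by simp
  have B: "B > 0" using \<open>u x2 > 0\<close> \<open>\<Theta> x2 > 0\<close> unfolding B_def by simp
  have bb: "b \<in> {0..b}" "0 \<in> {0..b}" using b by auto
  have ubp: "u b > 0" "u 0 > 0" "\<Theta> b > 0" "\<Theta> 0 > 0" using bb upos Tp by blast+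
  define c0 where "c0 = u' b * \<Theta> b / u b"
  have c0: "c0 > 0" using ub Tp upos bb by (auto simp: c0_def)
  define \<epsilon> where "\<epsilon> = min (A / (2 * b^2)) (c0 * (u b)^2 / b)"
  have e: "\<epsilon> > 0" using A c0 b ubp by (auto simp: \<epsilon>_def)
  define \<delta> where "\<delta> = \<epsilon> / (2 * B)"
  have d: "\<delta> > 0" using e B by (simp add: \<delta>_def)
  show ?thesis
  proof (intro exI conjI ballI)
    show "\<delta> > 0" by (rule d)
    fix p assume "p \<in> admissible_pairs b \<Theta>"
    then obtain f v where p: "p = (f, v)"
      and fd: "\<forall>x\<in>{0..b}. (f has_real_derivative v x) (at x within {0..b})"
      and vc: "continuous_on {0..b} v"
      and Dnz: "integral {0..b} (\<lambda>r. (f r)\<^sup>2 * \<Theta> r) \<noteq> 0"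
      unfolding admissible_pairs_def by auto
    define N where "N = integral {0..b} (\<lambda>r. (v r)\<^sup>2 * \<Theta> r)"
    define D where "D = integral {0..b} (\<lambda>r. (f r)\<^sup>2 * \<Theta> r)"
    have fc: "continuous_on {0..b} f" using fd by (intro DERIV_continuous_on) auto
    have cN: "continuous_on {0..b} (\<lambda>r. (v r)\<^sup>2 * \<Theta> r)" using vc Tc by (intro continuous_intros)
    have cD: "continuous_on {0..b} (\<lambda>r. (f r)\<^sup>2 * \<Theta> r)" using fc Tc by (intro continuous_intros)
    have iN: "((\<lambda>r. (v r)\<^sup>2 * \<Theta> r) has_integral N) {0..b}"
      unfolding N_def using integrable_continuous_interval[OF cN] by auto
    have iD: "((\<lambda>r. (f r)\<^sup>2 * \<Theta> r) has_integral D) {0..b}"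
      unfolding D_def using integrable_continuous_interval[OF cD] by auto
    have Tn: "\<forall>x\<in>{0..b}. \<Theta> x \<ge> 0" using Tp less_imp_le by blast
    have D0: "D \<ge> 0" unfolding D_def using Tn
      by (intro integral_nonneg integrable_continuous_interval[OF cD]) auto
    with Dnz have Dp: "D > 0" by (auto simp: D_def)
    define G where "G = (\<lambda>x. u' x * \<Theta> x * (f x)^2 / u x - \<epsilon> * x * (f x)^2 / (u x)^2)"
    define G' where "G' = (\<lambda>x. (u'' x * \<Theta> x + u' x * Tder x) * (f x)^2 / u x
        + u' x * \<Theta> x * (2 * f x * v x) / u x - (u' x)^2 * \<Theta> x * (f x)^2 / (u x)^2
        - (\<epsilon> * (f x)^2 / (u x)^2 + \<epsilon> * x * (2 * f x * v x) / (u x)^2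
           - 2 * \<epsilon> * x * (f x)^2 * u' x / (u x)^3))"
    have Gd: "(G has_real_derivative G' x) (at x within {0..b})" if x: "x \<in> {0..b}" for x
    proof -
      have "u x > 0" using upos x by blast
      then have ux: "u x \<noteq> 0" by simp
      show ?thesis unfolding G_def
        apply (rule derivative_eq_intros refl ud1[rule_format, OF x] ud2[rule_format, OF x]
                 Td[rule_format, OF x] fd[rule_format, OF x] | simp add: ux)+
        using ux unfolding G'_def by (simp add: divide_simps) algebra
    qed
    show "lam + \<delta> \<le> (integral {0..b} (\<lambda>r. (snd p r)\<^sup>2 * \<Theta> r) + \<sigma> * (fst p 0)\<^sup>2)
        / integral {0..b} (\<lambda>r. (fst p r)\<^sup>2 * \<Theta> r)"
    proof -
      have iG: "(G' has_integral (G b - G 0)) {0..b}"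
        using fundamental_theorem_of_calculus[of 0 b G G'] Gd b
        by (auto simp: has_real_derivative_iff_has_vector_derivative)
      have pw: "G' x \<le> (v x)\<^sup>2 * \<Theta> x - (lam + \<delta>) * ((f x)\<^sup>2 * \<Theta> x)" if x: "x \<in> {0..b}" for x
      proof -
        have ux: "u x > 0" using upos x by blast
        have Tx: "\<Theta> x > 0" using Tp x by blast
        have e1: "u'' x * \<Theta> x + u' x * Tder x = - lam * \<Theta> x * u x"
        proof -
          have "u'' x + Tder x / \<Theta> x * u' x + lam * u x = 0" using eq x by blast
          then have "\<Theta> x * u'' x + \<Theta> x * (Tder x / \<Theta> x * u' x) + \<Theta> x * (lam * u x) = 0"
            by (metis distrib_left mult_zero_right)
          moreover have "\<Theta> x * (Tder x / \<Theta> x * u' x) = Tder x * u' x" using Tx by simp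
          ultimately show ?thesis by (simp add: algebra_simps)
        qed
        have G'x: "G' x = - lam * \<Theta> x * (f x)^2
            + u' x * \<Theta> x * (2 * f x * v x) / u x - (u' x)^2 * \<Theta> x * (f x)^2 / (u x)^2
            - (\<epsilon> * (f x)^2 / (u x)^2 + \<epsilon> * x * (2 * f x * v x) / (u x)^2
               - 2 * \<epsilon> * x * (f x)^2 * u' x / (u x)^3)"
          unfolding G'_def e1 using ux by (simp add: field_simps power2_eq_square)
        define s where "s = u' x / u x"
        have id: "(v x)\<^sup>2 * \<Theta> x - (lam + \<delta>) * ((f x)\<^sup>2 * \<Theta> x) - G' x
           = \<Theta> x * (v x - s * f x)^2 + 2*\<epsilon>*x*f x*(v x - s * f x)/(u x)^2
             + \<epsilon>*(f x)^2/(u x)^2 - \<delta>*\<Theta> x*(f x)^2"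
          unfolding G'x s_def using ux by (simp add: field_simps power2_eq_square power3_eq_cube)
        have "0 \<le> \<Theta> x * (v x - s * f x)^2 + 2*\<epsilon>*x*f x*(v x - s * f x)/(u x)^2
             + \<epsilon>*(f x)^2/(u x)^2 - \<delta>*\<Theta> x*(f x)^2"
        proof (rule pw_ineq[OF Tx ux e _ _ _ _ _ \<delta>_def A b])
          show "0 \<le> x" "x \<le> b" using x by auto
          show "A \<le> (u x)\<^sup>2 * \<Theta> x" using x1 x unfolding A_def by blast
          show "(u x)\<^sup>2 * \<Theta> x \<le> B" using x2 x unfolding B_def by blast
          show "\<epsilon> \<le> A / (2 * b\<^sup>2)" unfolding \<epsilon>_def by simp
        qed
        then show ?thesis using id by linarith
      qed
      have iR: "((\<lambda>x. (v x)\<^sup>2 * \<Theta> x - (lam + \<delta>) * ((f x)\<^sup>2 * \<Theta> x)) has_integral (N - (lam + \<delta>) * D)) {0..b}"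
        by (intro has_integral_diff iN has_integral_mult_right iD)
      have le: "G b - G 0 \<le> N - (lam + \<delta>) * D"
        by (rule has_integral_le[OF iG iR]) (use pw in auto)
      have Gb: "G b \<ge> 0"
      proof -
        have "\<epsilon> \<le> c0 * (u b)^2 / b" unfolding \<epsilon>_def by simp
        then have "\<epsilon> * b / (u b)^2 \<le> c0" using b ubp by (simp add: field_simps)
        then have "\<epsilon> * b / (u b)^2 * (f b)^2 \<le> c0 * (f b)^2" by (intro mult_right_mono) auto
        then show ?thesis unfolding G_def c0_def using ubp by (simp add: field_simps)
      qed
      have G0: "G 0 = \<sigma> * \<Theta> 0 * (f 0)^2" unfolding G_def bc0 using ubp by simp
      have "\<sigma> * (1 - \<Theta> 0) * (f 0)^2 \<ge> 0" using m by simp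
      then have "(lam + \<delta>) * D \<le> N + \<sigma> * (f 0)^2" using le Gb G0 by (simp add: algebra_simps)
      then have "lam + \<delta> \<le> (N + \<sigma> * (f 0)^2) / D" using Dp
        by (simp add: field_simps)
      then show ?thesis unfolding p N_def D_def by simp
    qed
  qed
qed

theorem lemma3p1:
  fixes R \<sigma> lam :: real and \<Theta> u u' u'' :: "real \<Rightarrow> real" and S :: "real set"
  assumes R_pos: "R > 0"
    and S_open: "open S" and S_sub: "{0..R} \<subseteq> S"
    and \<Theta>_smooth: "\<forall>n. (deriv ^^ n) \<Theta> differentiable_on S"
    and \<Theta>_pos: "\<forall>r\<in>{0..<R}. \<Theta> r > 0"
    and \<sigma>_nz: "\<sigma> \<noteq> 0"
    and u_d1: "\<forall>r\<in>{0..R}. (u has_real_derivative u' r) (at r within {0..R})"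
    and u_d2: "\<forall>r\<in>{0..R}. (u' has_real_derivative u'' r) (at r within {0..R})"
    and u''_cont: "continuous_on {0..R} u''"
    and u_pos: "\<forall>r\<in>{0..R}. u r > 0"
    and eq: "\<forall>r\<in>{0..<R}. u'' r + deriv \<Theta> r / \<Theta> r * u' r + lam * u r = 0"
    and bc0: "u' 0 = \<sigma> * u 0"
    and bcR: "u' R = 0"
    and first: "lam = first_eigenvalue R \<Theta> \<sigma>"
  shows "(\<sigma> > 0 \<longrightarrow> (\<forall>r\<in>{0..<R}. u' r > 0))
       \<and> (\<sigma> < 0 \<longrightarrow> (\<forall>r\<in>{0..<R}. u' r < 0))
       \<and> (\<forall>Rb. \<sigma> > 0 \<and> 0 < Rb \<and> Rb < R \<longrightarrow>
              first_eigenvalue R \<Theta> \<sigma> < first_eigenvalue Rb \<Theta> \<sigma>)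
       \<and> ((\<forall>r\<in>{0..<R}. deriv (deriv (\<lambda>s. ln (\<Theta> s))) r < 0) \<longrightarrow>
            (\<sigma> > 0 \<longrightarrow> (\<forall>r\<in>{0..R}. 0 \<le> u' r / u r \<and> u' r / u r \<le> \<sigma>))
          \<and> (\<sigma> < 0 \<longrightarrow> (\<forall>r\<in>{0..R}. \<sigma> \<le> u' r / u r \<and> u' r / u r \<le> 0)))"
proof -
  have Tp: "\<And>x. 0 \<le> x \<Longrightarrow> x < R \<Longrightarrow> \<Theta> x > 0" using \<Theta>_pos by auto
  have up: "\<And>x. 0 \<le> x \<Longrightarrow> x \<le> R \<Longrightarrow> u x > 0" using u_pos by auto
  have TD: "(\<Theta> has_real_derivative deriv \<Theta> x) (at x)" if "x \<in> S" for x
  proof -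
    have "\<Theta> differentiable_on S" using \<Theta>_smooth[rule_format, of 0] by simp
    then have "\<Theta> differentiable (at x)"
      using S_open that differentiable_on_eq_differentiable_at by blast
    then show ?thesis using DERIV_deriv_iff_real_differentiable by blast
  qed
  have TDD: "(deriv \<Theta> has_real_derivative deriv (deriv \<Theta>) x) (at x)" if "x \<in> S" for x
  proof -
    have "deriv \<Theta> differentiable_on S" using \<Theta>_smooth[rule_format, of 1] by simp
    then have "deriv \<Theta> differentiable (at x)"
      using S_open that differentiable_on_eq_differentiable_at by blast
    then show ?thesis using DERIV_deriv_iff_real_differentiable by blast
  qed
  have Tc: "continuous_on {0..R} \<Theta>"
    by (rule has_real_derivative_imp_continuous_on[of _ _ "deriv \<Theta>"]) (use S_sub TD in blast)
  have TR: "\<Theta> R \<ge> 0"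
  proof -
    have "R \<in> S" using S_sub R_pos by auto
    then have "isCont \<Theta> R" using TD DERIV_isCont by blast
    then have "(\<Theta> \<longlongrightarrow> \<Theta> R) (at_left R)"
      by (simp add: isCont_def filterlim_at_split)
    moreover have "eventually (\<lambda>x. 0 \<le> \<Theta> x) (at_left R)"
    proof -
      have "eventually (\<lambda>x. x \<in> {0<..<R}) (at_left R)" using eventually_at_left_real[OF R_pos] .
      then show ?thesis by eventually_elim (auto intro: less_imp_le Tp)
    qed
    ultimately show ?thesis by (rule tendsto_lowerbound) simp
  qed
  have Tn: "\<forall>x\<in>{0..R}. \<Theta> x \<ge> 0"
    using \<Theta>_pos TR by (metis atLeastAtMost_iff atLeastLessThan_iff less_eq_real_def)
  have uc: "continuous_on {0..R} u" using u_d1 by (intro DERIV_continuous_on) auto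
  have u'c: "continuous_on {0..R} u'" using u_d2 by (intro DERIV_continuous_on) auto
  have atx: "at x within {0..R} = at x" if "0 < x" "x < R" for x
    using at_within_Icc_at that by blast
  have ud1: "\<And>x. 0 \<le> x \<Longrightarrow> x \<le> R \<Longrightarrow> (u has_real_derivative u' x) (at x within {0..R})"
    using u_d1 by auto
  have ud2: "\<And>x. 0 \<le> x \<Longrightarrow> x \<le> R \<Longrightarrow> (u' has_real_derivative u'' x) (at x within {0..R})"
    using u_d2 by auto
  have ud1a: "(u has_real_derivative u' x) (at x)" if "0 < x" "x < R" for x
    using ud1[of x] atx[OF that] that by simp
  have ud2a: "(u' has_real_derivative u'' x) (at x)" if "0 < x" "x < R" for x
    using ud2[of x] atx[OF that] that by simp
  have eqr: "\<And>x. 0 \<le> x \<Longrightarrow> x < R \<Longrightarrow> u'' x + deriv \<Theta> x / \<Theta> x * u' x + lam * u x = 0"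
    using eq by auto
  have Pd: "((\<lambda>x. \<Theta> x * u' x) has_real_derivative (- lam * (\<Theta> x * u x))) (at x)"
    if x0: "0 < x" "x < R" for x
  proof -
      have xs: "x \<in> S" using S_sub x0 by auto
      have d2: "(u' has_real_derivative u'' x) (at x)" using ud2a x0 by auto
      have Tx: "\<Theta> x > 0" using Tp x0 by auto
      have e: "u'' x + deriv \<Theta> x / \<Theta> x * u' x + lam * u x = 0" using eqr x0 by auto
      have "deriv \<Theta> x * u' x + u'' x * \<Theta> x = - lam * (\<Theta> x * u x)"
        using ode_mult[OF _ e] Tx by (simp add: mult.commute)
      then show ?thesis
        by (auto intro!: derivative_eq_intros TD[OF xs] d2)
  qed
  have flux: "\<Theta> r * u' r = lam * integral {r..R} (\<lambda>x. \<Theta> x * u x)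
       \<and> integral {r..R} (\<lambda>x. \<Theta> x * u x) > 0" if r: "r \<in> {0..<R}" for r
  proof -
    have sub: "{r..R} \<subseteq> {0..R}" using r by auto
    have c1: "continuous_on {r..R} (\<lambda>x. \<Theta> x * u' x)"
      using continuous_on_subset[OF Tc sub] continuous_on_subset[OF u'c sub] by (intro continuous_intros)
    have d1: "((\<lambda>x. \<Theta> x * u' x) has_vector_derivative (- lam * (\<Theta> x * u x))) (at x)"
      if x: "x \<in> {r<..<R}" for x
      using Pd[of x] x r by (simp add: has_real_derivative_iff_has_vector_derivative)
    have I1: "((\<lambda>x. - lam * (\<Theta> x * u x)) has_integral (\<Theta> R * u' R - \<Theta> r * u' r)) {r..R}"
      using fundamental_theorem_of_calculus_interior[OF _ c1 d1] r by auto
    have cI: "continuous_on {r..R} (\<lambda>x. \<Theta> x * u x)"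
      using continuous_on_subset[OF Tc sub] continuous_on_subset[OF uc sub] by (intro continuous_intros)
    have I2: "((\<lambda>x. - lam * (\<Theta> x * u x)) has_integral (- lam * integral {r..R} (\<lambda>x. \<Theta> x * u x))) {r..R}"
      by (intro has_integral_mult_right integrable_integral integrable_continuous_interval cI)
    have "\<Theta> R * u' R - \<Theta> r * u' r = - lam * integral {r..R} (\<lambda>x. \<Theta> x * u x)"
      using has_integral_unique[OF I1 I2] .
    then have A: "\<Theta> r * u' r = lam * integral {r..R} (\<lambda>x. \<Theta> x * u x)" using bcR by simp
    have B: "integral {r..R} (\<lambda>x. \<Theta> x * u x) > 0"
    proof (rule pos_integral)
      show "r < R" using r by auto
      show "continuous_on {r..R} (\<lambda>x. \<Theta> x * u x)" by (rule cI)
      show "0 \<le> \<Theta> x * u x" if "x \<in> {r<..<R}" for x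
        using that r by (intro mult_nonneg_nonneg less_imp_le Tp up) auto
      show "0 < \<Theta> r * u r" using r by (intro mult_pos_pos Tp up) auto
    qed
    show ?thesis using A B by simp
  qed
  have u0: "u 0 > 0" "\<Theta> 0 > 0" using R_pos by (auto intro: up Tp)
  have fl0: "\<Theta> 0 * (\<sigma> * u 0) = lam * integral {0..R} (\<lambda>x. \<Theta> x * u x)"
    "integral {0..R} (\<lambda>x. \<Theta> x * u x) > 0"
    using flux[of 0] R_pos bc0 by auto
  have lampos: "lam > 0" if "\<sigma> > 0"
  proof -
    have "\<Theta> 0 * (\<sigma> * u 0) > 0" using u0 that by simp
    then show ?thesis using fl0 by (simp add: zero_less_mult_iff)
  qed
  have lamneg: "lam < 0" if "\<sigma> < 0"
  proof -
    have "\<Theta> 0 * (\<sigma> * u 0) < 0" using mult_pos_neg[OF u0(2) mult_neg_pos[OF that u0(1)]] .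
    then show ?thesis using fl0 by (simp add: mult_less_0_iff)
  qed
  have pa: "\<forall>r\<in>{0..<R}. u' r > 0" if "\<sigma> > 0"
  proof
    fix r assume r: "r \<in> {0..<R}"
    have "\<Theta> r * u' r > 0" using flux[OF r] lampos[OF that] by simp
    moreover have "\<Theta> r > 0" using r by (auto intro: Tp)
    ultimately show "u' r > 0" by (simp add: zero_less_mult_iff)
  qed
  have pb: "\<forall>r\<in>{0..<R}. u' r < 0" if "\<sigma> < 0"
  proof
    fix r assume r: "r \<in> {0..<R}"
    have "\<Theta> r * u' r < 0" using flux[OF r] lamneg[OF that] by (simp add: mult_neg_pos)
    moreover have "\<Theta> r > 0" using r by (auto intro: Tp)
    ultimately show "u' r < 0" by (simp add: mult_less_0_iff)
  qed
  define Du where "Du = integral {0..R} (\<lambda>r. (u r)\<^sup>2 * \<Theta> r)"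
  define Nu where "Nu = integral {0..R} (\<lambda>r. (u' r)\<^sup>2 * \<Theta> r)"
  have cDu: "continuous_on {0..R} (\<lambda>r. (u r)\<^sup>2 * \<Theta> r)" using uc Tc by (intro continuous_intros)
  have cNu: "continuous_on {0..R} (\<lambda>r. (u' r)\<^sup>2 * \<Theta> r)" using u'c Tc by (intro continuous_intros)
  have Du: "Du > 0" unfolding Du_def
  proof (rule pos_integral[OF R_pos cDu])
    show "0 \<le> (u x)\<^sup>2 * \<Theta> x" if "x \<in> {0<..<R}" for x
      using that by (intro mult_nonneg_nonneg zero_le_power2 less_imp_le[OF Tp]) auto
    show "0 < (u 0)\<^sup>2 * \<Theta> 0" using u0 by simp
  qed
  have mm: "\<sigma> * (1 - \<Theta> 0) \<ge> 0"
  proof -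
    have cF: "continuous_on {0..R} (\<lambda>x. u x * (\<Theta> x * u' x))"
      using uc Tc u'c by (intro continuous_intros)
    have dF: "((\<lambda>x. u x * (\<Theta> x * u' x)) has_vector_derivative
        ((u' x)\<^sup>2 * \<Theta> x - lam * ((u x)\<^sup>2 * \<Theta> x))) (at x)" if "x \<in> {0<..<R}" for x
    proof -
      have x0: "0 < x" "x < R" using that by auto
      have "((\<lambda>x. u x * (\<Theta> x * u' x)) has_real_derivative
        (u' x * (\<Theta> x * u' x) + (- lam * (\<Theta> x * u x)) * u x)) (at x)"
        by (rule DERIV_mult[OF ud1a[OF x0] Pd[OF x0]])
      then show ?thesis
        by (simp add: has_real_derivative_iff_has_vector_derivative[symmetric] power2_eq_square algebra_simps)
    qed
    have I1: "((\<lambda>x. (u' x)\<^sup>2 * \<Theta> x - lam * ((u x)\<^sup>2 * \<Theta> x)) has_integral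
        (u R * (\<Theta> R * u' R) - u 0 * (\<Theta> 0 * u' 0))) {0..R}"
      using fundamental_theorem_of_calculus_interior[OF _ cF dF] R_pos by auto
    have I2: "((\<lambda>x. (u' x)\<^sup>2 * \<Theta> x - lam * ((u x)\<^sup>2 * \<Theta> x)) has_integral (Nu - lam * Du)) {0..R}"
      unfolding Nu_def Du_def
      by (intro has_integral_diff has_integral_mult_right integrable_integral integrable_continuous_interval cNu cDu)
    have NuDu: "Nu - lam * Du = - \<sigma> * \<Theta> 0 * (u 0)^2"
      using has_integral_unique[OF I2 I1] bcR bc0 by (simp add: power2_eq_square)
    have adm: "(u, u') \<in> admissible_pairs R \<Theta>"
      unfolding admissible_pairs_def using u_d1 u'c Du by (auto simp: Du_def)
    have bdd: "bdd_below ((\<lambda>p. (integral {0..R} (\<lambda>r. (snd p r)\<^sup>2 * \<Theta> r) + \<sigma> * (fst p 0)\<^sup>2)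
        / integral {0..R} (\<lambda>r. (fst p r)\<^sup>2 * \<Theta> r)) ` admissible_pairs R \<Theta>)"
      by (rule rayleigh_bdd_below[OF R_pos Tc \<Theta>_pos Tn])
    have "lam \<le> (Nu + \<sigma> * (u 0)\<^sup>2) / Du"
      using cINF_lower[OF bdd adm] first unfolding first_eigenvalue_def Nu_def Du_def by simp
    then have "lam * Du \<le> Nu + \<sigma> * (u 0)\<^sup>2" using Du by (simp add: field_simps)
    then have "0 \<le> \<sigma> * (1 - \<Theta> 0) * (u 0)^2" using NuDu by (simp add: algebra_simps)
    then show ?thesis using u0 by (simp add: zero_le_mult_iff)
  qed
  have pc: "first_eigenvalue R \<Theta> \<sigma> < first_eigenvalue Rb \<Theta> \<sigma>"
    if sp: "\<sigma> > 0" and Rb: "0 < Rb" "Rb < R" for Rb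
  proof -
    have sub: "{0..Rb} \<subseteq> {0..R}" using Rb by auto
    have ud1b: "(u has_real_derivative u' x) (at x within {0..Rb})" if "x \<in> {0..Rb}" for x
    proof -
      have "(u has_real_derivative u' x) (at x within {0..R})" using ud1 that Rb by auto
      then show ?thesis using DERIV_subset sub by blast
    qed
    have ud2b: "(u' has_real_derivative u'' x) (at x within {0..Rb})" if "x \<in> {0..Rb}" for x
    proof -
      have "(u' has_real_derivative u'' x) (at x within {0..R})" using ud2 that Rb by auto
      then show ?thesis using DERIV_subset sub by blast
    qed
    obtain \<delta> where d: "\<delta> > 0" and dd: "\<forall>p\<in>admissible_pairs Rb \<Theta>. lam + \<delta> \<le>
     (integral {0..Rb} (\<lambda>r. (snd p r)\<^sup>2 * \<Theta> r) + \<sigma> * (fst p 0)\<^sup>2)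
        / integral {0..Rb} (\<lambda>r. (fst p r)\<^sup>2 * \<Theta> r)"
    proof (atomize_elim, rule gap_lemma[where u''=u'' and Tder="deriv \<Theta>"])
      show "0 < Rb" by (rule Rb(1))
      show "continuous_on {0..Rb} \<Theta>" by (rule continuous_on_subset[OF Tc sub])
      show "\<forall>x\<in>{0..Rb}. 0 < \<Theta> x" using Rb by (auto intro: Tp)
      show "\<forall>x\<in>{0..Rb}. (\<Theta> has_real_derivative deriv \<Theta> x) (at x within {0..Rb})"
        using Rb S_sub by (auto intro!: has_field_derivative_at_within TD)
      show "\<forall>x\<in>{0..Rb}. (u has_real_derivative u' x) (at x within {0..Rb})"
        using ud1b by blast
      show "\<forall>x\<in>{0..Rb}. (u' has_real_derivative u'' x) (at x within {0..Rb})"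
        using ud2b by blast
      show "\<forall>x\<in>{0..Rb}. 0 < u x" using Rb by (auto intro: up)
      show "\<forall>x\<in>{0..Rb}. u'' x + deriv \<Theta> x / \<Theta> x * u' x + lam * u x = 0"
      proof
        fix x assume "x \<in> {0..Rb}"
        then show "u'' x + deriv \<Theta> x / \<Theta> x * u' x + lam * u x = 0" using Rb by (intro eqr) auto
      qed
      show "u' 0 = \<sigma> * u 0" by (rule bc0)
      show "0 < u' Rb" using pa[OF sp] Rb by auto
      show "0 \<le> \<sigma> * (1 - \<Theta> 0)" by (rule mm)
    qed
    have cDb: "continuous_on {0..Rb} (\<lambda>r. (u r)\<^sup>2 * \<Theta> r)" by (rule continuous_on_subset[OF cDu sub])
    have "integral {0..Rb} (\<lambda>r. (u r)\<^sup>2 * \<Theta> r) > 0"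
    proof (rule pos_integral[OF Rb(1) cDb])
      show "0 \<le> (u x)\<^sup>2 * \<Theta> x" if "x \<in> {0<..<Rb}" for x
        using that Rb by (intro mult_nonneg_nonneg zero_le_power2 less_imp_le[OF Tp]) auto
      show "0 < (u 0)\<^sup>2 * \<Theta> 0" using u0 by simp
    qed
    then have adm: "(u, u') \<in> admissible_pairs Rb \<Theta>"
      unfolding admissible_pairs_def using Rb
      by (auto intro: ud1b continuous_on_subset[OF u'c sub])
    have "lam + \<delta> \<le> first_eigenvalue Rb \<Theta> \<sigma>"
      unfolding first_eigenvalue_def
      by (rule cINF_greatest) (use adm dd in auto)
    then show ?thesis using first d by simp
  qed
  define sr where "sr = (\<lambda>x. u' x / u x)"
  define a where "a = (\<lambda>x. deriv \<Theta> x / \<Theta> x)"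
  define E where "E = (\<lambda>x. - a x * sr x - lam - (sr x)^2)"
  define la where "la = (\<lambda>x. (deriv (deriv \<Theta>) x * \<Theta> x - deriv \<Theta> x * deriv \<Theta> x) / (\<Theta> x * \<Theta> x))"
  have sd: "(sr has_real_derivative E x) (at x)" if x0: "0 < x" "x < R" for x
  proof -
    have ux: "u x > 0" using x0 by (intro up) auto
    have Tx: "\<Theta> x > 0" using x0 by (intro Tp) auto
    have e: "u'' x = - (deriv \<Theta> x / \<Theta> x) * u' x - lam * u x" using eqr[of x] x0 by auto
    have "(sr has_real_derivative (u'' x * u x - u' x * u' x) / (u x * u x)) (at x)"
      unfolding sr_def using ux by (auto intro!: derivative_eq_intros ud1a[OF x0] ud2a[OF x0] simp: power2_eq_square)
    moreover have "(u'' x * u x - u' x * u' x) / (u x * u x) = E x"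
      unfolding E_def a_def sr_def e using ux Tx by (simp add: field_simps power2_eq_square)
    ultimately show ?thesis by simp
  qed
  have ad: "(a has_real_derivative la x) (at x)" if x0: "0 < x" "x < R" for x
  proof -
    have xs: "x \<in> S" using S_sub x0 by auto
    have Tx: "\<Theta> x > 0" using x0 by (intro Tp) auto
    show ?thesis unfolding a_def la_def
      using Tx by (auto intro!: derivative_eq_intros TD[OF xs] TDD[OF xs])
  qed
  have laeq: "deriv (deriv (\<lambda>s. ln (\<Theta> s))) x = la x" if x0: "0 < x" "x < R" for x
  proof -
    have ev: "eventually (\<lambda>y. y \<in> {0<..<R}) (nhds x)"
      using x0 by (intro eventually_nhds_in_open) auto
    have "eventually (\<lambda>y. deriv (\<lambda>s. ln (\<Theta> s)) y = a y) (nhds x)"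
      using ev
    proof eventually_elim
      case (elim y)
      have ys: "y \<in> S" using S_sub elim by auto
      have Ty: "\<Theta> y > 0" using elim by (intro Tp) auto
      have "((\<lambda>s. ln (\<Theta> s)) has_real_derivative (deriv \<Theta> y / \<Theta> y)) (at y)"
        using Ty by (auto intro!: derivative_eq_intros TD[OF ys] simp: field_simps)
      then show ?case unfolding a_def by (rule DERIV_imp_deriv)
    qed
    then have "deriv (deriv (\<lambda>s. ln (\<Theta> s))) x = deriv a x" by (rule deriv_cong_ev) simp
    also have "\<dots> = la x" using ad[OF x0] by (rule DERIV_imp_deriv)
    finally show ?thesis .
  qed
  have Ed: "(E has_real_derivative (-(la x * sr x + a x * E x) - 2 * sr x * E x)) (at x)"
    if x0: "0 < x" "x < R" for x
  proof -
    have "((\<lambda>x. - a x * sr x - lam - (sr x)^2) has_real_derivative (-(la x * sr x + a x * E x) - 2 * sr x * E x)) (at x)"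
      by (auto intro!: derivative_eq_intros ad[OF x0] sd[OF x0] simp: power2_eq_square algebra_simps)
    then show ?thesis unfolding E_def[symmetric] .
  qed
  have sc: "continuous_on {0..R} sr"
    unfolding sr_def using uc u'c up by (intro continuous_intros) (auto simp: less_imp_neq[symmetric])
  have s0: "sr 0 = \<sigma>" using bc0 u0 by (simp add: sr_def)
  have sR: "sr R = 0" using bcR by (simp add: sr_def)
  have pd: "\<forall>r\<in>{0..R}. 0 \<le> sr r \<and> sr r \<le> \<sigma>"
    if sp: "\<sigma> > 0" and LC: "\<forall>r\<in>{0..<R}. deriv (deriv (\<lambda>s. ln (\<Theta> s))) r < 0"
  proof
    fix r assume r: "r \<in> {0..R}"
    show "0 \<le> sr r \<and> sr r \<le> \<sigma>"
    proof
      show "0 \<le> sr r"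
      proof (cases "r = R")
        case True then show ?thesis using sR by simp
      next
        case False
        then have "u' r > 0" using pa[OF sp] r by auto
        moreover have "u r > 0" using r by (intro up) auto
        ultimately show ?thesis by (simp add: sr_def)
      qed
      show "sr r \<le> \<sigma>"
      proof (rule ccontr)
        assume "\<not> sr r \<le> \<sigma>"
        then have gt: "sr r > \<sigma>" by simp
        obtain r0 where r0: "r0 \<in> {0..R}" "\<forall>y\<in>{0..R}. sr y \<le> sr r0"
          using continuous_attains_sup[OF _ _ sc] R_pos by auto
        have g0: "sr r0 > \<sigma>" using r0(2) r gt by force
        have "r0 \<noteq> 0" using g0 s0 by auto
        moreover have "r0 \<noteq> R" using g0 sR sp by auto
        ultimately have r0i: "0 < r0" "r0 < R" using r0(1) by auto
        have "r0 \<in> {0..<R}" using r0i by auto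
        then have lneg: "la r0 < 0" using LC laeq[OF r0i] by metis
        show False
        proof (rule no_interior_max[OF r0i sd Ed[OF r0i] _ r0(2)])
          assume "E r0 = 0"
          then show "0 < -(la r0 * sr r0 + a r0 * E r0) - 2 * sr r0 * E r0"
            using lneg g0 sp by (simp add: mult_neg_pos)
        qed auto
      qed
    qed
  qed
  have pe: "\<forall>r\<in>{0..R}. \<sigma> \<le> sr r \<and> sr r \<le> 0"
    if sn: "\<sigma> < 0" and LC: "\<forall>r\<in>{0..<R}. deriv (deriv (\<lambda>s. ln (\<Theta> s))) r < 0"
  proof
    fix r assume r: "r \<in> {0..R}"
    show "\<sigma> \<le> sr r \<and> sr r \<le> 0"
    proof
      show "sr r \<le> 0"
      proof (cases "r = R")
        case True then show ?thesis using sR by simp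
      next
        case False
        then have "u' r < 0" using pb[OF sn] r by auto
        moreover have "u r > 0" using r by (intro up) auto
        ultimately show ?thesis by (simp add: sr_def divide_nonpos_pos)
      qed
      show "\<sigma> \<le> sr r"
      proof (rule ccontr)
        assume "\<not> \<sigma> \<le> sr r"
        then have lt: "sr r < \<sigma>" by simp
        have msc: "continuous_on {0..R} (\<lambda>x. - sr x)" using sc by (intro continuous_intros)
        obtain r0 where r0: "r0 \<in> {0..R}" "\<forall>y\<in>{0..R}. - sr y \<le> - sr r0"
          using continuous_attains_sup[OF _ _ msc] R_pos by auto
        have g0: "sr r0 < \<sigma>" using r0(2) r lt by force
        have "r0 \<noteq> 0" using g0 s0 by auto
        moreover have "r0 \<noteq> R" using g0 sR sn by auto
        ultimately have r0i: "0 < r0" "r0 < R" using r0(1) by auto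
        have "r0 \<in> {0..<R}" using r0i by auto
        then have lneg: "la r0 < 0" using LC laeq[OF r0i] by metis
        have sd': "((\<lambda>x. - sr x) has_real_derivative - E x) (at x)" if "0 < x" "x < R" for x
          using sd[OF that] by (rule DERIV_minus)
        have Ed': "((\<lambda>x. - E x) has_real_derivative - (-(la r0 * sr r0 + a r0 * E r0) - 2 * sr r0 * E r0)) (at r0)"
          using Ed[OF r0i] by (rule DERIV_minus)
        show False
        proof (rule no_interior_max[OF r0i sd' Ed' _ r0(2)])
          assume "- E r0 = 0"
          then have "E r0 = 0" by simp
          then show "0 < - (-(la r0 * sr r0 + a r0 * E r0) - 2 * sr r0 * E r0)"
            using lneg g0 sn by (simp add: mult_neg_neg)
        qed auto
      qed
    qed
  qed
  show ?thesis
    using pa pb pc pd pe unfolding sr_def by blast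
qed

end
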